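(* Let $n_1,\dots,n_k\ge1$ with $n=\sum_in_i>k$, $n_{\min}=\min_in_i$, $n_{\max}=\max_in_i$. Let $B_k\in\mathbb{R}^{k\times k}$ be symmetric with nonnegative entries, $[B_k]_{ii}=\alpha_{ii}$ and $[B_k]_{ij}=\beta_{ij}$ for $i\ne j$. Let $$P=\begin{bmatrix}\mathbf{1}_{n_1}&0&\cdots&0\\0&\mathbf{1}_{n_2}&\cdots&0\\\vdots&&\ddots&\vdots\\0&0&\cdots&\mathbf{1}_{n_k}\end{bmatrix}\in\mathbb{R}^{n\times k},\quad A_{\mathrm{blk}}=PB_kP^T,\quad L_{\mathrm{blk}}=\mathrm{diag}\{A_{\mathrm{blk}}\mathbf{1}_n\}-A_{\mathrm{blk}}.$$ Suppose $$\Delta:=\min_i\alpha_{ii}-\frac{2n_{\max}}{n_{\min}}\max_i\sum_{j\ne i}\beta_{ij}>0.$$ Define $\tilde B_k=B_k\,\mathrm{diag}\{n_i\}_{i=1}^k$ and $\tilde L_k=\mathrm{diag}\{\tilde B_k\mathbf{1}_k\}-\tilde B_k$, and let $v_i(\tilde L_k)$ be a right eigenvector of $\tilde L_k$ associated with its $i$-th smallest eigenvalue $\lambda_i(\tilde L_k)$. Then: (1) for $i=1,\dots,k$, $\lambda_i(L_{\mathrm{blk}})=\lambda_i(\tilde L_k)$ and $Pv_i(\tilde L_k)$ is an eigenvector of $L_{\mathrm{blk}}$ associated with $\lambda_i(L_{\mathrm{blk}})$ (in particular $L_{\mathrm{blk}}$ is $k$-block-ideal); (2) $\lambda_{k+1}(L_{\mathrm{blk}})\ge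 b_{\min}n_{\min}$, where $b_{\min}=\min_i[B_k\mathbf{1}_k]_i$ is the minimum row sum of $B_k$; (3) $\lambda_{k+1}(L_{\mathrm{blk}})-\lambda_k(L_{\mathrm{blk}})\ge\Delta n_{\min}$.
   Context: $\lambda_i(\cdot)$ denotes the $i$-th smallest eigenvalue (the eigenvalues of $\tilde L_k$ are real). A Laplacian $L$ is $k$-block-ideal with respect to a partition $\{\mathcal{I}_1,\dots,\mathcal{I}_k\}$ of $[n]$ if there is an invertible $S\in\mathbb{R}^{k\times k}$ with $[v_1(L)\ \cdots\ v_k(L)]=[\mathbf{1}_{\mathcal{I}_1}\ \cdots\ \mathbf{1}_{\mathcal{I}_k}]S$, where $v_i(L)$ are orthonormal eigenvectors for the $k$ smallest eigenvalues and $\mathbf{1}_\mathcal{I}$ is the indicator vector of $\mathcal{I}$; here the partition is into consecutive blocks of sizes $n_1,\dots,n_k$. *)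

theory Defs
  imports "Jordan_Normal_Form.Matrix" "Jordan_Normal_Form.Char_Poly"
    "HOL-Computational_Algebra.Polynomial"
begin

text \<open>Eigenvalues of a square real matrix, listed with algebraic multiplicity
  (roots of the characteristic polynomial) in increasing order.
  lambda_i A (1-indexed) is the i-th smallest eigenvalue.\<close>
definition eigs_sorted :: "real mat \<Rightarrow> real list" where
  "eigs_sorted A = sorted_list_of_multiset (proots (char_poly A))"

definition lambda_i :: "real mat \<Rightarrow> nat \<Rightarrow> real" where
  "lambda_i A i = eigs_sorted A ! (i - 1)"

definition laplacian :: "real mat \<Rightarrow> real mat" where
  "laplacian A = mat (dim_row A) (dim_row A)
     (\<lambda>(i,j). (if i = j then (\<Sum>l<dim_col A. A $$ (i,l)) else 0) - A $$ (i,j))"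

definition diag_of :: "nat \<Rightarrow> (nat \<Rightarrow> real) \<Rightarrow> real mat" where
  "diag_of k d = mat k k (\<lambda>(i,j). if i = j then d i else 0)"

text \<open>Consecutive blocks of sizes ns 0, ..., ns (k-1) (0-indexed): block j is
  the index set [start j, start (j+1)).\<close>
definition block_start :: "(nat \<Rightarrow> nat) \<Rightarrow> nat \<Rightarrow> nat" where
  "block_start ns j = (\<Sum>l<j. ns l)"

definition in_block :: "(nat \<Rightarrow> nat) \<Rightarrow> nat \<Rightarrow> nat \<Rightarrow> bool" where
  "in_block ns j r \<longleftrightarrow> block_start ns j \<le> r \<and> r < block_start ns (Suc j)"

definition Pmat :: "nat \<Rightarrow> (nat \<Rightarrow> nat) \<Rightarrow> real mat" where
  "Pmat k ns = mat (block_start ns k) k (\<lambda>(r,j). if in_block ns j r then 1 else 0)"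

definition ortho_eigs_k :: "real mat \<Rightarrow> nat \<Rightarrow> real vec list \<Rightarrow> bool" where
  "ortho_eigs_k L k V \<longleftrightarrow> length V = k \<and>
     (\<forall>i<k. eigenvector L (V ! i) (lambda_i L (Suc i))) \<and>
     (\<forall>i<k. \<forall>j<k. (V ! i) \<bullet> (V ! j) = (if i = j then 1 else 0))"

definition k_block_ideal :: "real mat \<Rightarrow> nat \<Rightarrow> (nat \<Rightarrow> nat) \<Rightarrow> bool" where
  "k_block_ideal L k ns \<longleftrightarrow>
     (\<exists>V. ortho_eigs_k L k V) \<and>
     (\<forall>V. ortho_eigs_k L k V \<longrightarrow>
        (\<exists>S \<in> carrier_mat k k. invertible_mat S \<and>
           mat_of_cols (dim_row L) V = Pmat k ns * S))"

end

theory Submission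
  imports Defs "Jordan_Normal_Form.Schur_Decomposition"
begin

lemma sym_real_eig:
  fixes S :: "real mat"
  assumes S: "S \<in> carrier_mat n n" and n: "0 < n"
    and sym: "\<And>i j. i < n \<Longrightarrow> j < n \<Longrightarrow> S $$ (i,j) = S $$ (j,i)"
  shows "\<exists>e v. v \<in> carrier_vec n \<and> v \<noteq> 0\<^sub>v n \<and> S *\<^sub>v v = e \<cdot>\<^sub>v v"
proof -
  define Sc where "Sc = map_mat complex_of_real S"
  have Sc: "Sc \<in> carrier_mat n n" using S by (simp add: Sc_def)
  obtain as where cp: "char_poly Sc = (\<Prod>a\<leftarrow>as. [:-a,1:])" and len: "length as = n"
    using char_poly_factorized[OF Sc] by blast
  define z where "z = as ! 0"
  have "z \<in> set as" using len n by (simp add: z_def)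
  hence "poly (char_poly Sc) z = 0" unfolding cp
    by (auto simp: poly_prod_list prod_list_zero_iff)
  hence "eigenvalue Sc z" using eigenvalue_root_char_poly[OF Sc] by simp
  then obtain v where ev: "eigenvector Sc v z" unfolding eigenvalue_def by blast
  hence v: "v \<in> carrier_vec n" and v0: "v \<noteq> 0\<^sub>v n" and Sv: "Sc *\<^sub>v v = z \<cdot>\<^sub>v v"
    using Sc unfolding eigenvector_def by auto
  have Svi: "(\<Sum>j<n. complex_of_real (S$$(i,j)) * v$j) = z * v$i" if i: "i<n" for i
  proof -
    have "(Sc *\<^sub>v v) $ i = z * v $ i" using Sv i v by simp
    moreover have "(Sc *\<^sub>v v) $ i = (\<Sum>j<n. complex_of_real (S$$(i,j)) * v$j)"
      using i S v by (simp add: Sc_def scalar_prod_def lessThan_atLeast0)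
    ultimately show ?thesis by simp
  qed
  define q where "q = (\<Sum>i<n. cnj (v$i) * (\<Sum>j<n. complex_of_real (S$$(i,j)) * v$j))"
  define N where "N = (\<Sum>i<n. (cmod (v$i))^2)"
  have q1: "q = z * complex_of_real N"
  proof -
    have "q = (\<Sum>i<n. z * (v$i * cnj (v$i)))" unfolding q_def
      by (intro sum.cong refl) (subst Svi, auto)
    also have "\<dots> = z * complex_of_real N" unfolding N_def of_real_sum sum_distrib_left
      by (intro sum.cong refl) (simp add: complex_norm_square[symmetric])
    finally show ?thesis .
  qed
  have "cnj q = (\<Sum>i<n. \<Sum>j<n. v$i * (complex_of_real (S$$(i,j)) * cnj (v$j)))"
    unfolding q_def by (simp add: sum_distrib_left)
  also have "\<dots> = (\<Sum>j<n. \<Sum>i<n. v$i * (complex_of_real (S$$(i,j)) * cnj (v$j)))"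
    by (rule sum.swap)
  also have "\<dots> = q"
    unfolding q_def sum_distrib_left
    by (auto intro!: sum.cong simp: sym mult_ac)
  finally have "cnj q = q" .
  hence Imq: "Im q = 0" by (metis cnj.simps(2) complex.expand neg_equal_zero)
  obtain i where i: "i < n" "v $ i \<noteq> 0" using v v0 by (metis eq_vecI carrier_vecD index_zero_vec)
  have "N > 0" unfolding N_def
    by (rule sum_pos2[of _ i]) (use i in auto)
  have "Im z = 0" using q1 Imq \<open>N > 0\<close> by simp
  then obtain e where ze: "z = complex_of_real e" by (metis complex_is_Real_iff Reals_cases)
  have "poly (char_poly Sc) (complex_of_real e) = 0" using \<open>poly (char_poly Sc) z = 0\<close> ze by simp
  moreover have "char_poly Sc = map_poly complex_of_real (char_poly S)"
    unfolding Sc_def by (rule of_real_hom.char_poly_hom[OF S])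
  ultimately have "poly (char_poly S) e = 0" by (simp add: of_real_hom.poly_map_poly)
  hence "eigenvalue S e" using eigenvalue_root_char_poly[OF S] by simp
  then obtain w where "eigenvector S w e" unfolding eigenvalue_def by blast
  thus ?thesis using S unfolding eigenvector_def by auto
qed

lemma real_cscalar[simp]: "(v :: real vec) \<bullet>c w = v \<bullet> w"
  by (simp add: conjugate_real_def conjugate_vec_def scalar_prod_def)

lemma spectral_aux:
  fixes S :: "real mat"
  assumes "S \<in> carrier_mat n n" and "\<And>i j. i < n \<Longrightarrow> j < n \<Longrightarrow> S $$ (i,j) = S $$ (j,i)"
  shows "\<exists>us ds. length us = n \<and> length ds = n \<and> set us \<subseteq> carrier_vec n \<and>
     (\<forall>i<n. S *\<^sub>v (us!i) = ds!i \<cdot>\<^sub>v (us!i)) \<and>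
     (\<forall>i<n. \<forall>j<n. us!i \<bullet> us!j = (if i = j then 1 else 0))"
  using assms
proof (induction n arbitrary: S)
  case 0
  show ?case by (intro exI[of _ "[]"]) auto
next
  case (Suc m)
  let ?n = "Suc m"
  have S: "S \<in> carrier_mat ?n ?n" by fact
  obtain e v where v: "v \<in> carrier_vec ?n" "v \<noteq> 0\<^sub>v ?n" and Sv: "S *\<^sub>v v = e \<cdot>\<^sub>v v"
    using sym_real_eig[OF Suc.prems(1) _ Suc.prems(2)] by auto
  interpret cof_vec_space ?n "TYPE(real)" .
  define b where "b = basis_completion v"
  from basis_completion[OF v] have b: "set b \<subseteq> carrier_vec ?n" "distinct b" "\<not> lin_dep (set b)"
     "length b = ?n" "hd b = v" by (auto simp: b_def)
  then obtain vs where bv: "b = v # vs" by (cases b) auto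
  define ws where "ws = gram_schmidt ?n b"
  from gram_schmidt_result[OF b(1,2,3) ws_def] b
  have ws: "corthogonal ws" "set ws \<subseteq> carrier_vec ?n" "length ws = ?n" by auto
  have hdws: "hd ws = v" using gram_schmidt_hd[OF v(1), of vs] bv ws_def by simp
  have ws0: "ws ! 0 = v" using hdws ws(3) by (metis hd_conv_nth list.size(3) nat.simps(3))
  have wsc: "ws ! i \<in> carrier_vec ?n" if "i < ?n" for i using ws that by auto
  have wsorth: "ws ! i \<bullet> ws ! j = 0 \<longleftrightarrow> i \<noteq> j" if "i < ?n" "j < ?n" for i j
    using corthogonalD[OF ws(1)] that ws(3) by simp
  define nz where "nz w = (1 / sqrt (w \<bullet> w)) \<cdot>\<^sub>v w" for w :: "real vec"
  have nzc: "w \<in> carrier_vec ?n \<Longrightarrow> nz w \<in> carrier_vec ?n" for w by (simp add: nz_def)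
  have wpos: "w \<bullet> w > 0" if "w \<in> carrier_vec ?n" "w \<bullet> w \<noteq> 0" for w :: "real vec"
    using that conjugate_square_ge_0_vec[of w] by simp
  have nzprod: "nz w \<bullet> nz w' = (1 / sqrt (w \<bullet> w)) * (1 / sqrt (w' \<bullet> w')) * (w \<bullet> w')"
    if "w \<in> carrier_vec ?n" "w' \<in> carrier_vec ?n" for w w'
    using that unfolding nz_def by (simp add: smult_scalar_prod_distrib scalar_prod_smult_distrib)
  define W where "W = mat_of_cols ?n (map nz ws)"
  have W: "W \<in> carrier_mat ?n ?n" unfolding W_def using ws by auto
  have colW: "col W j = nz (ws ! j)" if "j < ?n" for j
    unfolding W_def using that ws nzc wsc by (simp add: col_mat_of_cols)
  have colorth: "col W i \<bullet> col W j = (if i = j then 1 else 0)" if "i < ?n" "j < ?n" for i j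
  proof (cases "i = j")
    case True
    have p: "ws ! i \<bullet> ws ! i > 0" using wpos[OF wsc[OF that(1)]] wsorth[OF that(1) that(1)] by auto
    show ?thesis using True colW[OF that(1)] nzprod[OF wsc[OF that(1)] wsc[OF that(1)]] p
      by (simp add: field_simps)
  next
    case False
    thus ?thesis using colW that nzprod wsc wsorth by simp
  qed
  have WTW: "transpose_mat W * W = 1\<^sub>m ?n"
    by (rule eq_matI, insert W colorth, auto)
  have WWT: "W * transpose_mat W = 1\<^sub>m ?n"
    using mat_mult_left_right_inverse[OF _ W WTW] W by auto
  define u where "u = col W 0"
  have u: "u \<in> carrier_vec ?n" unfolding u_def by (rule carrier_vecI, insert W, simp)
  have "v \<bullet> v > 0" using wpos[OF v(1)] v ws0 wsorth[of 0 0] by auto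
  have u_def2: "u = (1 / sqrt (v \<bullet> v)) \<cdot>\<^sub>v v" unfolding u_def using colW[of 0] ws0 nz_def by simp
  have Su: "S *\<^sub>v u = e \<cdot>\<^sub>v u" unfolding u_def2 using S v Sv
    using mult_mat_vec[OF S v(1)] by (simp add: smult_smult_assoc mult.commute)

  have ST: "transpose_mat S = S" by (rule eq_matI, insert S Suc.prems(2), auto)
  define A' where "A' = transpose_mat W * S * W"
  have A': "A' \<in> carrier_mat ?n ?n" unfolding A'_def using W S by auto
  have A'ij: "A' $$ (i,j) = col W i \<bullet> (S *\<^sub>v col W j)" if "i < ?n" "j < ?n" for i j
  proof -
    have "A' = transpose_mat W * (S * W)" unfolding A'_def using W S by (simp add: assoc_mult_mat[of _ ?n ?n _ ?n _ ?n])
    hence "A' $$ (i,j) = row (transpose_mat W) i \<bullet> col (S * W) j" using that W S by simp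
    also have "col (S * W) j = S *\<^sub>v col W j" by (rule col_mult2[OF S W]) (use that in simp)
    also have "row (transpose_mat W) i = col W i" using that W by simp
    finally show ?thesis .
  qed
  have A'sym: "A' $$ (i,j) = A' $$ (j,i)" if "i < ?n" "j < ?n" for i j
  proof -
    have c: "col W i \<in> carrier_vec ?n" "col W j \<in> carrier_vec ?n" using W that by auto
    have "col W i \<bullet> (S *\<^sub>v col W j) = (transpose_mat S *\<^sub>v col W i) \<bullet> col W j"
      by (rule transpose_vec_mult_scalar[symmetric, OF S c(2) c(1)])
    also have "\<dots> = col W j \<bullet> (S *\<^sub>v col W i)" unfolding ST
      by (rule comm_scalar_prod[of _ ?n], insert S c, auto)
    finally show ?thesis using A'ij that by simp
  qed
  have col0: "A' $$ (i,0) = (if i = 0 then e else 0)" if "i < ?n" for i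
  proof -
    have "A' $$ (i,0) = col W i \<bullet> (e \<cdot>\<^sub>v u)" using A'ij[OF that] Su unfolding u_def by simp
    also have "\<dots> = e * (col W i \<bullet> col W 0)" using W that unfolding u_def
      by (simp add: scalar_prod_smult_distrib[of _ ?n])
    finally show ?thesis using colorth[OF that, of 0] by simp
  qed
  have row0: "A' $$ (0,j) = 0" if "j < ?n" "j \<noteq> 0" for j
    using A'sym[OF _ that(1), of 0] col0[OF that(1)] that by simp
  define A3 where "A3 = mat m m (\<lambda>(i,j). A' $$ (Suc i, Suc j))"
  have A3: "A3 \<in> carrier_mat m m" unfolding A3_def by simp
  have A3sym: "A3 $$ (i,j) = A3 $$ (j,i)" if "i < m" "j < m" for i j
    unfolding A3_def using that A'sym by simp
  obtain us3 ds3 where IH: "length us3 = m" "length ds3 = m" "set us3 \<subseteq> carrier_vec m"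
     "\<forall>i<m. A3 *\<^sub>v (us3!i) = ds3!i \<cdot>\<^sub>v (us3!i)"
     "\<forall>i<m. \<forall>j<m. us3!i \<bullet> us3!j = (if i = j then 1 else 0)"
    using Suc.IH[OF A3 A3sym] by blast
  define emb where "emb x = vec ?n (\<lambda>i. if i = 0 then 0 else x $ (i - 1))" for x :: "real vec"
  have embc: "emb x \<in> carrier_vec ?n" for x unfolding emb_def by simp
  have embprod: "emb x \<bullet> emb y = x \<bullet> y" if "x \<in> carrier_vec m" "y \<in> carrier_vec m" for x y
  proof -
    have "emb x \<bullet> emb y = (\<Sum>i<Suc m. emb x $ i * emb y $ i)"
      unfolding scalar_prod_def lessThan_atLeast0 by (simp add: emb_def)
    also have "\<dots> = (\<Sum>i<m. x $ i * y $ i)"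
      by (subst sum.lessThan_Suc_shift) (simp add: emb_def)
    also have "\<dots> = x \<bullet> y" using that unfolding scalar_prod_def lessThan_atLeast0 by simp
    finally show ?thesis .
  qed
  have embsm: "emb (d \<cdot>\<^sub>v x) = d \<cdot>\<^sub>v emb x" if "x \<in> carrier_vec m" for d x
    using that unfolding emb_def by (intro eq_vecI) auto
  have A'emb: "A' *\<^sub>v emb x = emb (A3 *\<^sub>v x)" if x: "x \<in> carrier_vec m" for x
  proof (rule eq_vecI)
    show "dim_vec (A' *\<^sub>v emb x) = dim_vec (emb (A3 *\<^sub>v x))" using A' unfolding emb_def by simp
    fix i assume "i < dim_vec (emb (A3 *\<^sub>v x))"
    hence i: "i < ?n" unfolding emb_def by simp
    have "(A' *\<^sub>v emb x) $ i = (\<Sum>j<?n. A' $$ (i,j) * emb x $ j)"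
      using A' i embc[of x] by (simp add: scalar_prod_def lessThan_atLeast0)
    also have "\<dots> = (\<Sum>j<m. A' $$ (i, Suc j) * x $ j)"
      by (subst sum.lessThan_Suc_shift) (simp add: emb_def)
    also have "\<dots> = emb (A3 *\<^sub>v x) $ i"
    proof (cases i)
      case 0
      thus ?thesis using row0 unfolding emb_def by simp
    next
      case (Suc i')
      thus ?thesis using i x A3 unfolding emb_def A3_def
        by (simp add: scalar_prod_def lessThan_atLeast0)
    qed
    finally show "(A' *\<^sub>v emb x) $ i = emb (A3 *\<^sub>v x) $ i" .
  qed
  have SW: "S *\<^sub>v (W *\<^sub>v y) = W *\<^sub>v (A' *\<^sub>v y)" if "y \<in> carrier_vec ?n" for y
  proof -
    have "W * A' = (W * transpose_mat W) * S * W" unfolding A'_def using W S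
      by (simp add: assoc_mult_mat[of _ ?n ?n _ ?n _ ?n])
    also have "\<dots> = S * W" unfolding WWT using S W by simp
    finally have "W * A' = S * W" .
    thus ?thesis using that W S A'
      by (metis assoc_mult_mat_vec)
  qed
  have WW: "(W *\<^sub>v y) \<bullet> (W *\<^sub>v z) = y \<bullet> z" if "y \<in> carrier_vec ?n" "z \<in> carrier_vec ?n" for y z
  proof -
    have "(W *\<^sub>v y) \<bullet> (W *\<^sub>v z) = (transpose_mat (transpose_mat W) *\<^sub>v y) \<bullet> (W *\<^sub>v z)" by simp
    also have "\<dots> = y \<bullet> (transpose_mat W *\<^sub>v (W *\<^sub>v z))"
      by (rule transpose_vec_mult_scalar[of _ ?n ?n], insert W that, auto)
    also have "transpose_mat W *\<^sub>v (W *\<^sub>v z) = z" using W that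
      by (metis WTW assoc_mult_mat_vec carrier_matI index_transpose_mat(2,3) one_mult_mat_vec carrier_matD)
    finally show ?thesis .
  qed
  have Wu: "transpose_mat W *\<^sub>v u = unit_vec ?n 0"
  proof -
    have "col (transpose_mat W * W) 0 = transpose_mat W *\<^sub>v col W 0"
      by (rule col_mult2[of _ ?n ?n _ ?n]) (use W in auto)
    hence "transpose_mat W *\<^sub>v u = col (transpose_mat W * W) 0" unfolding u_def by simp
    thus ?thesis unfolding WTW by simp
  qed
  have uW: "u \<bullet> (W *\<^sub>v y) = y $ 0" if "y \<in> carrier_vec ?n" for y
  proof -
    have "u \<bullet> (W *\<^sub>v y) = (transpose_mat W *\<^sub>v u) \<bullet> y"
      using transpose_vec_mult_scalar[of W ?n ?n y u] W that u by simp
    thus ?thesis unfolding Wu using that by simp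
  qed
  define us where "us = u # map (\<lambda>x. W *\<^sub>v emb x) us3"
  define ds where "ds = e # ds3"
  have usc: "us ! i \<in> carrier_vec ?n" if "i < ?n" for i
    using that u W embc IH(1) unfolding us_def by (cases i) auto
  show ?case
  proof (intro exI[of _ us] exI[of _ ds] conjI allI impI)
    show "length us = ?n" "length ds = ?n" unfolding us_def ds_def using IH by auto
    show "set us \<subseteq> carrier_vec ?n" using usc \<open>length us = ?n\<close> by (metis in_set_conv_nth subsetI)
  next
    fix i assume i: "i < ?n"
    show "S *\<^sub>v us ! i = ds ! i \<cdot>\<^sub>v us ! i"
    proof (cases i)
      case 0 thus ?thesis using Su unfolding us_def ds_def by simp
    next
      case (Suc i')
      hence i': "i' < m" using i by simp
      have x: "us3 ! i' \<in> carrier_vec m" using IH(1,3) i' by auto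
      have "S *\<^sub>v us ! i = W *\<^sub>v (A' *\<^sub>v emb (us3 ! i'))" unfolding us_def Suc using SW embc IH(1) i' by simp
      also have "\<dots> = W *\<^sub>v emb (ds3 ! i' \<cdot>\<^sub>v us3 ! i')" using A'emb[OF x] IH(4) i' by simp
      also have "\<dots> = ds ! i \<cdot>\<^sub>v us ! i" unfolding us_def ds_def Suc using embsm[OF x] W embc IH(1) i'
        by (simp add: mult_mat_vec)
      finally show ?thesis .
    qed
  next
    fix i j assume i: "i < ?n" and j: "j < ?n"
    have uu: "u \<bullet> u = 1" using colorth[of 0 0] unfolding u_def by simp
    have ue: "u \<bullet> (W *\<^sub>v emb x) = 0" for x using uW[OF embc] unfolding emb_def by simp
    have eu: "(W *\<^sub>v emb x) \<bullet> u = 0" for x using ue[of x] comm_scalar_prod[OF u, of "W *\<^sub>v emb x"] W embc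
      by (metis mult_mat_vec_carrier)
    show "us ! i \<bullet> us ! j = (if i = j then 1 else 0)"
    proof (cases i; cases j)
      fix i' j' assume ii: "i = Suc i'" and jj: "j = Suc j'"
      hence "i' < m" "j' < m" using i j by auto
      hence c: "us3!i' \<in> carrier_vec m" "us3!j' \<in> carrier_vec m" using IH(1,3) nth_mem by blast+
      have "us ! i \<bullet> us ! j = emb (us3!i') \<bullet> emb (us3!j')" using WW embc IH(1) \<open>i' < m\<close> \<open>j' < m\<close> by (simp add: us_def ii jj)
      also have "\<dots> = us3!i' \<bullet> us3!j'" by (rule embprod[OF c])
      finally show ?thesis using IH(5) \<open>i' < m\<close> \<open>j' < m\<close> ii jj by simp
    qed (insert i j, auto simp: us_def IH(1) uu ue eu)
  qed
qed

lemma proots_linear_prod: "proots (\<Prod>a\<leftarrow>ds. [:- a, 1:]) = mset (ds :: real list)"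
proof (induction ds)
  case (Cons a ds)
  have nz: "(\<Prod>a\<leftarrow>ds. [:- a, 1:]) \<noteq> (0 :: real poly)"
    by (auto simp: prod_list_zero_iff)
  have "proots (\<Prod>a\<leftarrow>a#ds. [:- a, 1:]) = proots [:-a,1:] + proots (\<Prod>a\<leftarrow>ds. [:- a, 1:])"
    unfolding list.map prod_list.Cons by (rule proots_mult, simp, fact nz)
  thus ?case using Cons proots_linear_factor[of "-a"] by simp
qed simp

lemma spectral_sorted:
  fixes S :: "real mat"
  assumes S: "S \<in> carrier_mat n n" and sym: "\<And>i j. i < n \<Longrightarrow> j < n \<Longrightarrow> S $$ (i,j) = S $$ (j,i)"
  shows "length (eigs_sorted S) = n \<and> (\<exists>us. length us = n \<and> set us \<subseteq> carrier_vec n \<and>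
     (\<forall>i<n. S *\<^sub>v (us!i) = eigs_sorted S ! i \<cdot>\<^sub>v (us!i)) \<and>
     (\<forall>i<n. \<forall>j<n. us!i \<bullet> us!j = (if i = j then 1 else 0)))"
proof -
  obtain us ds where us: "length us = n" "length ds = n" "set us \<subseteq> carrier_vec n"
     "\<forall>i<n. S *\<^sub>v (us!i) = ds!i \<cdot>\<^sub>v (us!i)"
     "\<forall>i<n. \<forall>j<n. us!i \<bullet> us!j = (if i = j then 1 else 0)"
    using spectral_aux[OF S sym] by blast
  have usc: "us ! i \<in> carrier_vec n" if "i < n" for i using us that nth_mem by blast
  define W where "W = mat_of_cols n us"
  have W: "W \<in> carrier_mat n n" unfolding W_def using us by auto
  have colW: "col W j = us ! j" if "j < n" for j unfolding W_def using that us usc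
    by (simp add: col_mat_of_cols)
  have WTW: "transpose_mat W * W = 1\<^sub>m n"
    by (rule eq_matI, insert W colW us(5), auto)
  have WWT: "W * transpose_mat W = 1\<^sub>m n"
    using mat_mult_left_right_inverse[OF _ W WTW] W by auto
  define D where "D = mat n n (\<lambda>(i,j). if i = j then ds ! i else 0)"
  have D: "D \<in> carrier_mat n n" unfolding D_def by simp
  have SW: "S * W = W * D"
  proof (rule eq_matI)
    fix i j assume i: "i < dim_row (W * D)" and j: "j < dim_col (W * D)"
    hence i: "i < n" and j: "j < n" using W D by auto
    have "(S * W) $$ (i,j) = (S *\<^sub>v col W j) $ i" using S W i j by simp
    also have "\<dots> = ds ! j * us ! j $ i" using colW[OF j] us(4) j i usc[OF j] by simp
    also have "\<dots> = W $$ (i,j) * ds ! j" using arg_cong[OF colW[OF j], of "\<lambda>v. v $ i"] W i j by simp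
    also have "\<dots> = (W * D) $$ (i,j)" using W D i j
      by (simp add: D_def scalar_prod_def if_distrib[of "\<lambda>x. _ * x"] cong: if_cong)
    finally show "(S * W) $$ (i,j) = (W * D) $$ (i,j)" .
  qed (insert S W D, auto)
  have "similar_mat_wit S D W (transpose_mat W)"
  proof -
    have "S = S * (W * transpose_mat W)" using S unfolding WWT by simp
    also have "\<dots> = (S * W) * transpose_mat W" using S W by (simp add: assoc_mult_mat[of _ n n _ n _ n])
    also have "\<dots> = W * D * transpose_mat W" unfolding SW ..
    finally show ?thesis unfolding similar_mat_wit_def Let_def using S W D WWT WTW by auto
  qed
  hence "char_poly S = char_poly D" using char_poly_similar unfolding similar_mat_def by blast
  also have "\<dots> = (\<Prod>a\<leftarrow>diag_mat D. [:- a, 1:])"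
    by (rule char_poly_upper_triangular[OF D], auto simp: D_def upper_triangular_def)
  also have "diag_mat D = ds" unfolding diag_mat_def D_def using us(2)
    by (simp add: list_eq_iff_nth_eq)
  finally have cp: "char_poly S = (\<Prod>a\<leftarrow>ds. [:- a, 1:])" .
  have pr: "proots (char_poly S) = mset ds" unfolding cp
    by (rule proots_linear_prod)
  have es: "eigs_sorted S = sort ds" unfolding eigs_sorted_def pr
    by (simp add: sorted_list_of_multiset_mset)
  define zs where "zs = sort_key snd (zip us ds)"
  have mz: "mset zs = mset (zip us ds)" unfolding zs_def by simp
  have lz: "length zs = n" using mz us by (metis length_zip min.idem size_mset)
  have "sort ds = map snd zs"
  proof (rule properties_for_sort)
    show "mset (map snd zs) = mset ds" using mz us
      by (metis map_snd_zip mset_map)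
    show "sorted (map snd zs)" unfolding zs_def by (rule sorted_sort_key)
  qed
  hence es2: "eigs_sorted S = map snd zs" using es by simp
  from mset_eq_permutation[OF mz] obtain p where p: "p permutes {..<length (zip us ds)}"
    and pz: "permute_list p (zip us ds) = zs" by metis
  have pn: "p permutes {..<n}" using p us by simp
  have zsi: "zs ! i = (us ! p i, ds ! p i)" if "i < n" for i
  proof -
    have "p i < n" using permutes_in_image[OF pn, of i] that by simp
    thus ?thesis using pz[symmetric] that us permute_list_nth[OF p, of i] by simp
  qed
  have pi: "p i < n" if "i < n" for i using permutes_in_image[OF pn, of i] that by simp
  have pinj: "p i = p j \<longleftrightarrow> i = j" for i j using pn by (meson permutes_inj injD)
  show ?thesis
  proof (intro conjI exI[of _ "map fst zs"] allI impI)
    show "length (eigs_sorted S) = n" "length (map fst zs) = n" using es2 lz by auto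
    show "set (map fst zs) \<subseteq> carrier_vec n" using lz zsi usc pi
      by (auto simp: in_set_conv_nth)
  next
    fix i assume i: "i < n"
    show "S *\<^sub>v map fst zs ! i = eigs_sorted S ! i \<cdot>\<^sub>v map fst zs ! i"
      unfolding es2 using i lz zsi[OF i] us(4) pi[OF i] by simp
  next
    fix i j assume i: "i < n" and j: "j < n"
    show "map fst zs ! i \<bullet> map fst zs ! j = (if i = j then 1 else 0)"
      using i j lz zsi[OF i] zsi[OF j] us(5) pi[OF i] pi[OF j] pinj[of i j] by simp
  qed
qed

definition blk :: "(nat \<Rightarrow> nat) \<Rightarrow> nat \<Rightarrow> nat" where
  "blk ns r = (LEAST j. r < block_start ns (Suc j))"

lemma bs_Suc: "block_start ns (Suc j) = block_start ns j + ns j"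
  unfolding block_start_def by simp

lemma bs_mono: "i \<le> j \<Longrightarrow> block_start ns i \<le> block_start ns j"
  unfolding block_start_def by (rule sum_mono2) auto

lemma blk_in: assumes "r < block_start ns k"
  shows "blk ns r < k \<and> in_block ns (blk ns r) r"
proof -
  have k: "k > 0" using assms by (cases k) (auto simp: block_start_def)
  have ex: "r < block_start ns (Suc (k - 1))" using assms k by simp
  have le: "blk ns r \<le> k - 1" unfolding blk_def by (rule Least_le[of "\<lambda>j. r < block_start ns (Suc j)", OF ex])
  have lt: "r < block_start ns (Suc (blk ns r))" unfolding blk_def by (rule LeastI[of "\<lambda>j. r < block_start ns (Suc j)", OF ex])
  have ge: "block_start ns (blk ns r) \<le> r"
  proof (cases "blk ns r")
    case 0 thus ?thesis by (simp add: block_start_def)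
  next
    case (Suc j)
    have "j < blk ns r" using Suc by simp
    hence "\<not> r < block_start ns (Suc j)" unfolding blk_def by (rule not_less_Least)
    thus ?thesis using Suc by simp
  qed
  show ?thesis using le lt ge k unfolding in_block_def by auto
qed

lemma blk_eq: assumes "in_block ns j r" shows "blk ns r = j"
proof -
  have a: "r < block_start ns (Suc j)" "block_start ns j \<le> r" using assms unfolding in_block_def by auto
  have "blk ns r \<le> j" unfolding blk_def by (rule Least_le[of "\<lambda>j. r < block_start ns (Suc j)", OF a(1)])
  moreover have "\<not> blk ns r < j"
  proof
    assume "blk ns r < j"
    hence "block_start ns (Suc (blk ns r)) \<le> block_start ns j" by (intro bs_mono) simp
    moreover have "r < block_start ns (Suc (blk ns r))" unfolding blk_def by (rule LeastI[of "\<lambda>j. r < block_start ns (Suc j)", OF a(1)])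
    ultimately show False using a(2) by simp
  qed
  ultimately show ?thesis by simp
qed

lemma sum_blocks:
  "(\<Sum>r<block_start ns m. f r) = (\<Sum>j<m. \<Sum>r\<in>{block_start ns j..<block_start ns (Suc j)}. f r)"
proof (induction m)
  case 0 thus ?case by (simp add: block_start_def)
next
  case (Suc m)
  have "(\<Sum>r<block_start ns (Suc m). f r) = (\<Sum>r<block_start ns m. f r) +
      (\<Sum>r\<in>{block_start ns m..<block_start ns (Suc m)}. f r)"
    unfolding lessThan_atLeast0
    by (rule sum.atLeastLessThan_concat[symmetric]) (auto simp: bs_Suc)
  thus ?case using Suc by simp
qed

lemma sum_blk:
  "(\<Sum>r<block_start ns k. f (blk ns r)) = (\<Sum>j<k. real (ns j) * f j)"
proof -
  have "(\<Sum>r<block_start ns k. f (blk ns r)) =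
     (\<Sum>j<k. \<Sum>r\<in>{block_start ns j..<block_start ns (Suc j)}. f (blk ns r))"
    by (rule sum_blocks)
  also have "\<dots> = (\<Sum>j<k. \<Sum>r\<in>{block_start ns j..<block_start ns (Suc j)}. f j)"
    by (intro sum.cong refl, rule blk_eq[THEN arg_cong[of _ _ f]]) (auto simp: in_block_def)
  also have "\<dots> = (\<Sum>j<k. real (ns j) * f j)" by (simp add: bs_Suc)
  finally show ?thesis .
qed

lemma start_in: assumes "ns j \<ge> 1" shows "in_block ns j (block_start ns j)"
  using assms unfolding in_block_def by (simp add: bs_Suc)

lemma start_lt: assumes "j < k" "ns j \<ge> 1" shows "block_start ns j < block_start ns k"
proof -
  have "block_start ns (Suc j) \<le> block_start ns k" using assms by (intro bs_mono) simp
  thus ?thesis using assms by (simp add: bs_Suc)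
qed

lemma Pmat_entry: assumes "r < block_start ns k" "j < k"
  shows "Pmat k ns $$ (r,j) = (if blk ns r = j then 1 else 0)"
  using assms blk_in[OF assms(1)] blk_eq[of ns j r] unfolding Pmat_def by auto

lemma Pmat_carrier: "Pmat k ns \<in> carrier_mat (block_start ns k) k"
  unfolding Pmat_def by simp

definition dg :: "nat \<Rightarrow> (nat \<Rightarrow> nat) \<Rightarrow> real mat \<Rightarrow> nat \<Rightarrow> real" where
  "dg k ns B i = (\<Sum>j<k. B $$ (i,j) * real (ns j))"

lemma laplacian_entry: assumes "M \<in> carrier_mat m m" "i < m" "j < m"
  shows "laplacian M $$ (i,j) = (if i = j then (\<Sum>l<m. M $$ (i,l)) else 0) - M $$ (i,j)"
  using assms unfolding laplacian_def by auto

lemma mult_entry: assumes "M \<in> carrier_mat a b" "M' \<in> carrier_mat b c" "i < a" "j < c"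
  shows "(M * M') $$ (i,j) = (\<Sum>l<b. M $$ (i,l) * M' $$ (l,j))"
  using assms by (simp add: scalar_prod_def lessThan_atLeast0)

context
  fixes k :: nat and ns :: "nat \<Rightarrow> nat" and B :: "real mat"
  assumes B: "B \<in> carrier_mat k k"
begin

lemma PB_entry: assumes "x < block_start ns k" "l < k"
  shows "(Pmat k ns * B) $$ (x,l) = B $$ (blk ns x, l)"
proof -
  have "(Pmat k ns * B) $$ (x,l) = (\<Sum>j<k. Pmat k ns $$ (x,j) * B $$ (j,l))"
    using assms B Pmat_carrier[of k ns] by (simp add: scalar_prod_def lessThan_atLeast0)
  also have "\<dots> = (\<Sum>j<k. if j = blk ns x then B $$ (j,l) else 0)"
    by (intro sum.cong refl) (use assms in \<open>auto simp: Pmat_entry\<close>)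
  also have "\<dots> = B $$ (blk ns x, l)" using blk_in[OF assms(1)] by simp
  finally show ?thesis .
qed

lemma A_carrier: "Pmat k ns * B * transpose_mat (Pmat k ns) \<in> carrier_mat (block_start ns k) (block_start ns k)"
  using B Pmat_carrier[of k ns] by auto

lemma A_entry: assumes "x < block_start ns k" "y < block_start ns k"
  shows "(Pmat k ns * B * transpose_mat (Pmat k ns)) $$ (x,y) = B $$ (blk ns x, blk ns y)"
proof -
  have PB: "Pmat k ns * B \<in> carrier_mat (block_start ns k) k" using B Pmat_carrier[of k ns] by auto
  have "(Pmat k ns * B * transpose_mat (Pmat k ns)) $$ (x,y) =
     (\<Sum>l<k. (Pmat k ns * B) $$ (x,l) * transpose_mat (Pmat k ns) $$ (l,y))"
    by (rule mult_entry[OF PB _ assms(1,2)]) (use Pmat_carrier[of k ns] in auto)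
  also have "\<dots> = (\<Sum>l<k. (Pmat k ns * B) $$ (x,l) * Pmat k ns $$ (y,l))"
    using assms Pmat_carrier[of k ns] by (intro sum.cong refl) auto
  also have "\<dots> = (\<Sum>l<k. if l = blk ns y then B $$ (blk ns x, l) else 0)"
    by (intro sum.cong refl) (use assms in \<open>auto simp: Pmat_entry PB_entry\<close>)
  also have "\<dots> = B $$ (blk ns x, blk ns y)" using blk_in[OF assms(2)] by simp
  finally show ?thesis .
qed

lemma L_carrier: "laplacian (Pmat k ns * B * transpose_mat (Pmat k ns)) \<in> carrier_mat (block_start ns k) (block_start ns k)"
  using A_carrier unfolding laplacian_def by auto

lemma L_entry: assumes "x < block_start ns k" "y < block_start ns k"
  shows "laplacian (Pmat k ns * B * transpose_mat (Pmat k ns)) $$ (x,y) =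
    (if x = y then dg k ns B (blk ns x) else 0) - B $$ (blk ns x, blk ns y)"
proof -
  have "(\<Sum>l<block_start ns k. (Pmat k ns * B * transpose_mat (Pmat k ns)) $$ (x,l))
      = (\<Sum>l<block_start ns k. B $$ (blk ns x, blk ns l))"
    by (intro sum.cong refl) (use assms in \<open>auto simp: A_entry\<close>)
  also have "\<dots> = dg k ns B (blk ns x)" unfolding dg_def
    by (subst sum_blk[where ns = ns and k = k and f = "\<lambda>j. B $$ (blk ns x, j)"]) (simp add: mult.commute)
  thus ?thesis using assms by (auto simp: laplacian_entry[OF A_carrier] A_entry)
qed

lemma Lt_carrier: "laplacian (B * diag_of k (\<lambda>i. real (ns i))) \<in> carrier_mat k k"
  using B unfolding laplacian_def diag_of_def by auto

lemma Bt_entry: assumes "i < k" "j < k"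
  shows "(B * diag_of k (\<lambda>i. real (ns i))) $$ (i,j) = B $$ (i,j) * real (ns j)"
proof -
  have "(B * diag_of k (\<lambda>i. real (ns i))) $$ (i,j) = (\<Sum>l<k. B $$ (i,l) * (if l = j then real (ns l) else 0))"
    using assms B by (simp add: diag_of_def scalar_prod_def lessThan_atLeast0)
  also have "\<dots> = B $$ (i,j) * real (ns j)" using assms(2)
    by (simp add: if_distrib[of "\<lambda>x. _ * x"] cong: if_cong)
  finally show ?thesis .
qed

lemma Lt_entry: assumes "i < k" "j < k"
  shows "laplacian (B * diag_of k (\<lambda>i. real (ns i))) $$ (i,j) =
    (if i = j then dg k ns B i else 0) - B $$ (i,j) * real (ns j)"
proof -
  have Bt: "B * diag_of k (\<lambda>i. real (ns i)) \<in> carrier_mat k k" using B by (simp add: diag_of_def)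
  show ?thesis using assms unfolding laplacian_entry[OF Bt assms] dg_def
    by (simp add: Bt_entry)
qed

lemma LP: "laplacian (Pmat k ns * B * transpose_mat (Pmat k ns)) * Pmat k ns =
    Pmat k ns * laplacian (B * diag_of k (\<lambda>i. real (ns i)))"
  (is "?L * ?P = ?P * ?Lt")
proof (rule eq_matI)
  fix x c assume "x < dim_row (?P * ?Lt)" "c < dim_col (?P * ?Lt)"
  hence x: "x < block_start ns k" and c: "c < k" using Pmat_carrier[of k ns] Lt_carrier by auto
  have bx: "blk ns x < k" using blk_in[OF x] by simp
  have "(?L * ?P) $$ (x,c) = (\<Sum>y<block_start ns k. ?L $$ (x,y) * ?P $$ (y,c))"
    using x c L_carrier Pmat_carrier[of k ns] by (simp add: scalar_prod_def lessThan_atLeast0)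
  also have "\<dots> = (\<Sum>y<block_start ns k. (if y = x then (if blk ns x = c then dg k ns B (blk ns x) else 0) else 0))
      - (\<Sum>y<block_start ns k. (if blk ns y = c then B $$ (blk ns x, c) else 0))"
    unfolding sum_subtractf[symmetric]
    by (intro sum.cong refl) (use x c in \<open>auto simp: L_entry Pmat_entry\<close>)
  also have "\<dots> = (if blk ns x = c then dg k ns B (blk ns x) else 0) - real (ns c) * B $$ (blk ns x, c)"
    using x by (simp add: sum_blk[where ns = ns and k = k and f = "\<lambda>j. if j = c then B $$ (blk ns x, c) else 0"] c if_distrib[of "\<lambda>x. _ * x"] cong: if_cong)
  also have "\<dots> = (\<Sum>j<k. (if blk ns x = j then ?Lt $$ (j,c) else 0))"
    using bx c by (simp add: Lt_entry)
  also have "\<dots> = (?P * ?Lt) $$ (x,c)"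
    using x c Lt_carrier Pmat_carrier[of k ns]
    by (simp add: scalar_prod_def lessThan_atLeast0 Pmat_entry if_distrib[of "\<lambda>x. x * _"] cong: if_cong)
  finally show "(?L * ?P) $$ (x,c) = (?P * ?Lt) $$ (x,c)" .
qed (insert L_carrier Lt_carrier Pmat_carrier[of k ns], auto)

end

lemma char_poly_four_block_zero:
  fixes A :: "'a :: idom mat"
  assumes A: "A \<in> carrier_mat n n" and Bm: "Bm \<in> carrier_mat n m" and D: "D \<in> carrier_mat m m"
  shows "char_poly (four_block_mat A Bm (0\<^sub>m m n) D) = char_poly A * char_poly D"
proof -
  let ?cm = "\<lambda> A. [:0, 1:] \<cdot>\<^sub>m 1\<^sub>m (dim_row A) + map_mat (\<lambda>a. [:- a:]) A"
  let ?B2 = "map_mat (\<lambda>a. [:- a:]) Bm"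
  have "char_poly (four_block_mat A Bm (0\<^sub>m m n) D) = det (?cm (four_block_mat A Bm (0\<^sub>m m n) D))"
    unfolding char_poly_defs by simp
  also have "?cm (four_block_mat A Bm (0\<^sub>m m n) D) = four_block_mat (?cm A) ?B2 (0\<^sub>m m n) (?cm D)"
    by (rule eq_matI, insert A Bm D, auto simp: one_poly_def)
  also have "det \<dots> = det (?cm A) * det (?cm D)"
    by (rule det_four_block_mat_lower_left_zero[OF _ _ refl], insert A Bm D, auto)
  also have "\<dots> = char_poly A * char_poly D" unfolding char_poly_defs ..
  finally show ?thesis .
qed

lemma sum_if_lt: fixes f :: "nat \<Rightarrow> 'a :: comm_monoid_add" and k bN :: nat
  assumes "k \<le> bN"
  shows "(\<Sum>y<bN. if y < k then f y else 0) = (\<Sum>y<k. f y)"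
proof -
  have "(\<Sum>y<bN. if y < k then f y else 0) = (\<Sum>y\<in>{0..<k}. if y < k then f y else 0) + (\<Sum>y\<in>{k..<bN}. if y < k then f y else 0)"
    unfolding lessThan_atLeast0 by (rule sum.atLeastLessThan_concat[symmetric]) (use assms in auto)
  also have "(\<Sum>y\<in>{k..<bN}. if y < k then f y else 0) = 0" by (intro sum.neutral) auto
  finally show ?thesis by (simp add: lessThan_atLeast0)
qed

context
  fixes k :: nat and ns :: "nat \<Rightarrow> nat" and B :: "real mat"
  assumes B: "B \<in> carrier_mat k k"
    and ns_pos: "\<forall>i<k. ns i \<ge> 1"
    and kN: "k < block_start ns k"
begin

abbreviation "bN \<equiv> block_start ns k"
abbreviation "bP \<equiv> Pmat k ns"
abbreviation "bL \<equiv> laplacian (Pmat k ns * B * transpose_mat (Pmat k ns))"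
abbreviation "bLt \<equiv> laplacian (B * diag_of k (\<lambda>i. real (ns i)))"

lemma st_lt: "j < k \<Longrightarrow> block_start ns j < bN"
  using start_lt ns_pos by auto

lemma blk_st: "j < k \<Longrightarrow> blk ns (block_start ns j) = j"
  using blk_eq start_in ns_pos by auto

lemma st_inj: "inj_on (block_start ns) {..<k}"
  by (intro inj_onI) (metis blk_st lessThan_iff)

definition NSs where "NSs = {..<bN} - block_start ns ` {..<k}"

lemma card_NS: "card NSs = bN - k"
proof -
  have "block_start ns ` {..<k} \<subseteq> {..<bN}" using st_lt by auto
  thus ?thesis unfolding NSs_def
    by (subst card_Diff_subset) (auto simp: card_image[OF st_inj])
qed

definition gmap where "gmap = (SOME h. bij_betw h {0..<bN - k} NSs)"

lemma g_bij: "bij_betw gmap {0..<bN - k} NSs"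
proof -
  have "finite NSs" unfolding NSs_def by simp
  from ex_bij_betw_nat_finite[OF this] show ?thesis unfolding gmap_def card_NS by (metis someI_ex)
qed

lemma g_lt: "i < bN - k \<Longrightarrow> gmap i < bN"
  using bij_betw_apply[OF g_bij, of i] unfolding NSs_def by auto

lemma g_nst: "i < bN - k \<Longrightarrow> j < k \<Longrightarrow> gmap i \<noteq> block_start ns j"
  using bij_betw_apply[OF g_bij, of i] unfolding NSs_def by auto

lemma g_inj: "i < bN - k \<Longrightarrow> j < bN - k \<Longrightarrow> gmap i = gmap j \<longleftrightarrow> i = j"
  using g_bij unfolding bij_betw_def inj_on_def by auto

definition Qm where "Qm = mat bN bN (\<lambda>(r,c). if c < k then bP $$ (r,c) else if r = gmap (c - k) then 1 else 0)"

lemma Q_carrier: "Qm \<in> carrier_mat bN bN" unfolding Qm_def by simp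

lemma Q_inj: assumes v: "v \<in> carrier_vec bN" and Qv: "Qm *\<^sub>v v = 0\<^sub>v bN" shows "v = 0\<^sub>v bN"
proof -
  have Qvr: "(\<Sum>c<bN. Qm $$ (r,c) * v $ c) = 0" if "r < bN" for r
  proof -
    have "(Qm *\<^sub>v v) $ r = 0" using Qv that by simp
    thus ?thesis using that v Q_carrier by (simp add: scalar_prod_def lessThan_atLeast0)
  qed
  have v1: "v $ j = 0" if j: "j < k" for j
  proof -
    have r: "block_start ns j < bN" using st_lt j by simp
    have gn: "\<forall>c. k \<le> c \<longrightarrow> c < bN \<longrightarrow> gmap (c - k) \<noteq> block_start ns j" using g_nst j by auto
    have "(\<Sum>c<bN. Qm $$ (block_start ns j, c) * v $ c) = (\<Sum>c<bN. if c = j then v $ c else 0)"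
    proof (intro sum.cong refl)
      fix c assume c: "c \<in> {..<bN}"
      show "Qm $$ (block_start ns j, c) * v $ c = (if c = j then v $ c else 0)"
      proof (cases "c < k")
        case True thus ?thesis using r j c by (auto simp: Qm_def Pmat_entry blk_st)
      next
        case False
        hence "gmap (c - k) \<noteq> block_start ns j" using gn c by auto
        thus ?thesis using r j c False by (auto simp: Qm_def)
      qed
    qed
    thus ?thesis using Qvr[OF r] j kN by simp
  qed
  have v2: "v $ c = 0" if c: "c < bN" "k \<le> c" for c
  proof -
    have r: "gmap (c - k) < bN" using g_lt c by simp
    have "(\<Sum>c'<bN. Qm $$ (gmap (c - k), c') * v $ c') = (\<Sum>c'<bN. if c' = c then v $ c' else 0)"
      by (intro sum.cong refl) (use r c in \<open>auto simp: Qm_def v1 g_inj\<close>)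
    thus ?thesis using Qvr[OF r] c by simp
  qed
  show ?thesis
    by (rule eq_vecI) (use v v1 v2 kN in \<open>auto, metis v1 v2 not_le less_trans\<close>)
qed

lemma Lc: "bL \<in> carrier_mat bN bN" by (rule L_carrier[OF B])
lemma Ltc: "bLt \<in> carrier_mat k k" by (rule Lt_carrier[OF B])
lemma Lt_dims[simp]: "dim_row bLt = k" "dim_col bLt = k" using Ltc by auto

lemma blk_g: "i < bN - k \<Longrightarrow> blk ns (gmap i) < k"
  using blk_in[OF g_lt] by auto

definition ddv where "ddv i = dg k ns B (blk ns (gmap i))"
definition Xm where "Xm = mat k (bN - k) (\<lambda>(j,c). - B $$ (j, blk ns (gmap c)))"
definition Dgm where "Dgm = mat (bN - k) (bN - k) (\<lambda>(i,j). if i = j then ddv i else 0)"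
definition Mm where "Mm = four_block_mat bLt Xm (0\<^sub>m (bN - k) k) Dgm"

lemma M_carrier: "Mm \<in> carrier_mat bN bN"
proof -
  have "Mm \<in> carrier_mat (k + (bN - k)) (k + (bN - k))" unfolding Mm_def Xm_def Dgm_def
    by (rule four_block_carrier_mat[OF Ltc]) simp
  thus ?thesis using kN by simp
qed

lemma M_entry: assumes "y < bN" "c < bN"
  shows "Mm $$ (y,c) = (if y < k then if c < k then bLt $$ (y,c) else - B $$ (y, blk ns (gmap (c - k)))
     else if c < k then 0 else (if y = c then ddv (c - k) else 0))"
  using assms kN Ltc unfolding Mm_def Xm_def Dgm_def by auto

lemma LQ: "bL * Qm = Qm * Mm"
proof (rule eq_matI)
  fix x c assume "x < dim_row (Qm * Mm)" "c < dim_col (Qm * Mm)"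
  hence x: "x < bN" and c: "c < bN" using Q_carrier M_carrier by auto
  have bx: "blk ns x < k" using blk_in[OF x] by simp
  have lhs: "(bL * Qm) $$ (x,c) = (\<Sum>y<bN. bL $$ (x,y) * Qm $$ (y,c))"
    by (rule mult_entry[OF Lc Q_carrier x c])
  have rhs: "(Qm * Mm) $$ (x,c) = (\<Sum>y<bN. Qm $$ (x,y) * Mm $$ (y,c))"
    by (rule mult_entry[OF Q_carrier M_carrier x c])
  show "(bL * Qm) $$ (x,c) = (Qm * Mm) $$ (x,c)"
  proof (cases "c < k")
    case True
    have "(bL * Qm) $$ (x,c) = (bL * bP) $$ (x,c)"
      unfolding lhs using x c True Lc Pmat_carrier[of k ns]
      by (subst mult_entry[of _ bN bN _ k]) (auto simp: Qm_def intro!: sum.cong)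
    also have "\<dots> = (bP * bLt) $$ (x,c)" by (simp add: LP[OF B])
    also have "\<dots> = (\<Sum>y<k. bP $$ (x,y) * bLt $$ (y,c))"
      by (rule mult_entry[OF Pmat_carrier Ltc x True])
    also have "\<dots> = (\<Sum>y<bN. if y < k then bP $$ (x,y) * bLt $$ (y,c) else 0)"
      by (rule sum_if_lt[symmetric]) (use kN in simp)
    also have "\<dots> = (Qm * Mm) $$ (x,c)" unfolding rhs
      by (intro sum.cong refl) (use x c True in \<open>auto simp: M_entry Qm_def\<close>)
    finally show ?thesis .
  next
    case False
    let ?r = "gmap (c - k)"
    have ck: "c - k < bN - k" using c False by simp
    have r: "?r < bN" using g_lt[OF ck] .
    have "(bL * Qm) $$ (x,c) = (\<Sum>y<bN. if y = ?r then bL $$ (x,y) else 0)"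
      unfolding lhs by (intro sum.cong refl) (use False c r in \<open>auto simp: Qm_def\<close>)
    also have "\<dots> = bL $$ (x, ?r)" using r by simp
    also have "\<dots> = (if x = ?r then dg k ns B (blk ns x) else 0) - B $$ (blk ns x, blk ns ?r)"
      by (rule L_entry[OF B x r])
    also have "\<dots> = (\<Sum>y<bN. (if y = blk ns x then - B $$ (blk ns x, blk ns ?r) else 0)
        + (if y = c then (if x = ?r then ddv (c - k) else 0) else 0))"
      unfolding sum.distrib using bx x c False kN by (auto simp: ddv_def)
    also have "\<dots> = (Qm * Mm) $$ (x,c)" unfolding rhs
    proof (intro sum.cong refl)
      fix y assume y: "y \<in> {..<bN}"
      show "(if y = blk ns x then - B $$ (blk ns x, blk ns ?r) else 0)
        + (if y = c then (if x = ?r then ddv (c - k) else 0) else 0) = Qm $$ (x,y) * Mm $$ (y,c)"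
      proof (cases "y < k")
        case True thus ?thesis using x y c False bx by (auto simp: M_entry Qm_def Pmat_entry)
      next
        case yk: False
        have "y - k < bN - k" using y yk by auto
        thus ?thesis using x y c False yk bx by (auto simp: M_entry Qm_def g_inj)
      qed
    qed
    finally show ?thesis .
  qed
qed (use Q_carrier M_carrier Lc in auto)

lemma Q_inverse: "\<exists>Qi. Qi \<in> carrier_mat bN bN \<and> Qm * Qi = 1\<^sub>m bN \<and> Qi * Qm = 1\<^sub>m bN"
proof -
  have "det Qm \<noteq> 0" using det_0_iff_vec_prod_zero_field[OF Q_carrier] Q_inj by blast
  from det_non_zero_imp_unit[OF Q_carrier this, of undefined]
  show ?thesis unfolding Units_def ring_mat_def by auto
qed

lemma char_poly_L: "char_poly bL = char_poly bLt * (\<Prod>a\<leftarrow>map ddv [0..<bN - k]. [:- a, 1:])"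
proof -
  obtain Qi where Qi: "Qi \<in> carrier_mat bN bN" "Qm * Qi = 1\<^sub>m bN" "Qi * Qm = 1\<^sub>m bN" using Q_inverse by blast
  have "bL = bL * (Qm * Qi)" using Lc Qi by simp
  also have "\<dots> = (bL * Qm) * Qi" using Lc Q_carrier Qi by (simp add: assoc_mult_mat[of _ bN bN _ bN _ bN])
  also have "\<dots> = Qm * Mm * Qi" unfolding LQ ..
  finally have "similar_mat_wit bL Mm Qm Qi" unfolding similar_mat_wit_def Let_def
    using Lc M_carrier Q_carrier Qi by auto
  hence "char_poly bL = char_poly Mm" using char_poly_similar unfolding similar_mat_def by blast
  also have "\<dots> = char_poly bLt * char_poly Dgm" unfolding Mm_def
    by (rule char_poly_four_block_zero[OF Ltc]) (auto simp: Xm_def Dgm_def)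
  also have "char_poly Dgm = (\<Prod>a\<leftarrow>diag_mat Dgm. [:- a, 1:])"
    by (rule char_poly_upper_triangular[of _ "bN - k"]) (auto simp: Dgm_def upper_triangular_def)
  also have "diag_mat Dgm = map ddv [0..<bN - k]" unfolding diag_mat_def Dgm_def
    by (simp add: list_eq_iff_nth_eq)
  finally show ?thesis .
qed

lemma proots_L: "proots (char_poly bL) = proots (char_poly bLt) + mset (map ddv [0..<bN - k])"
proof -
  have nz: "char_poly bLt \<noteq> 0" using degree_monic_char_poly[OF Ltc] by auto
  have nz2: "(\<Prod>a\<leftarrow>map ddv [0..<bN - k]. [:- a, 1:]) \<noteq> (0 :: real poly)" by (auto simp: prod_list_zero_iff)
  show ?thesis unfolding char_poly_L proots_mult[OF nz nz2] proots_linear_prod ..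
qed

lemma P_eig: assumes ev: "eigenvector bLt v \<mu>" shows "eigenvector bL (bP *\<^sub>v v) \<mu>"
proof -
  have v: "v \<in> carrier_vec k" and v0: "v \<noteq> 0\<^sub>v k" and Lv: "bLt *\<^sub>v v = \<mu> \<cdot>\<^sub>v v"
    using ev Ltc unfolding eigenvector_def by auto
  have Pc: "bP \<in> carrier_mat bN k" by (rule Pmat_carrier)
  have Pv: "bP *\<^sub>v v \<in> carrier_vec bN" using Pc v by simp
  obtain j where j: "j < k" "v $ j \<noteq> 0" using v v0 by (metis eq_vecI carrier_vecD index_zero_vec)
  have "(bP *\<^sub>v v) $ block_start ns j = (\<Sum>c<k. bP $$ (block_start ns j, c) * v $ c)"
    using Pc v st_lt[OF j(1)] by (simp add: scalar_prod_def lessThan_atLeast0)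
  also have "\<dots> = (\<Sum>c<k. if c = j then v $ c else 0)"
    by (intro sum.cong refl) (use j st_lt[OF j(1)] in \<open>auto simp: Pmat_entry blk_st\<close>)
  also have "\<dots> = v $ j" using j by simp
  finally have "bP *\<^sub>v v \<noteq> 0\<^sub>v bN" using j st_lt[OF j(1)] by auto
  moreover have "bL *\<^sub>v (bP *\<^sub>v v) = \<mu> \<cdot>\<^sub>v (bP *\<^sub>v v)"
  proof -
    have "bL *\<^sub>v (bP *\<^sub>v v) = (bL * bP) *\<^sub>v v" using Lc Pc v by (simp add: assoc_mult_mat_vec)
    also have "\<dots> = (bP * bLt) *\<^sub>v v" by (simp add: LP[OF B])
    also have "\<dots> = bP *\<^sub>v (\<mu> \<cdot>\<^sub>v v)" using Pc Ltc v Lv by (simp add: assoc_mult_mat_vec)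
    also have "\<dots> = \<mu> \<cdot>\<^sub>v (bP *\<^sub>v v)" using Pc v by (simp add: mult_mat_vec)
    finally show ?thesis .
  qed
  ultimately show ?thesis unfolding eigenvector_def using Pv Lc by auto
qed

lemma range_P: assumes ev: "eigenvector bL x \<mu>" and lt: "\<forall>j<k. \<mu> < dg k ns B j"
  shows "\<exists>u \<in> carrier_vec k. x = bP *\<^sub>v u"
proof -
  have x: "x \<in> carrier_vec bN" and Lx: "bL *\<^sub>v x = \<mu> \<cdot>\<^sub>v x" using ev Lc unfolding eigenvector_def by auto
  define \<sigma> where "\<sigma> i = (\<Sum>y<bN. B $$ (i, blk ns y) * x $ y)" for i
  have key: "x $ r = \<sigma> (blk ns r) / (dg k ns B (blk ns r) - \<mu>)" if r: "r < bN" for r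
  proof -
    have br: "blk ns r < k" using blk_in[OF r] by simp
    have "\<mu> * x $ r = (bL *\<^sub>v x) $ r" using Lx r x by simp
    also have "\<dots> = (\<Sum>y<bN. bL $$ (r,y) * x $ y)" using Lc x r by (simp add: scalar_prod_def lessThan_atLeast0)
    also have "\<dots> = (\<Sum>y<bN. if y = r then dg k ns B (blk ns r) * x $ y else 0) - \<sigma> (blk ns r)"
      unfolding \<sigma>_def sum_subtractf[symmetric]
      by (intro sum.cong refl) (use r in \<open>auto simp: L_entry[OF B] algebra_simps\<close>)
    also have "\<dots> = dg k ns B (blk ns r) * x $ r - \<sigma> (blk ns r)" using r by simp
    finally have "(dg k ns B (blk ns r) - \<mu>) * x $ r = \<sigma> (blk ns r)" by (simp add: algebra_simps)
    moreover have "dg k ns B (blk ns r) - \<mu> > 0" using lt br by simp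
    ultimately show ?thesis by (simp add: field_simps)
  qed
  define u where "u = vec k (\<lambda>j. x $ block_start ns j)"
  have "x = bP *\<^sub>v u"
  proof (rule eq_vecI)
    show "dim_vec x = dim_vec (bP *\<^sub>v u)" using x Pmat_carrier[of k ns] by simp
    fix r assume "r < dim_vec (bP *\<^sub>v u)"
    hence r: "r < bN" using Pmat_carrier[of k ns] by simp
    have br: "blk ns r < k" using blk_in[OF r] by simp
    have "(bP *\<^sub>v u) $ r = (\<Sum>c<k. bP $$ (r, c) * u $ c)"
      using Pmat_carrier[of k ns] r by (simp add: scalar_prod_def lessThan_atLeast0 u_def)
    also have "\<dots> = (\<Sum>c<k. if c = blk ns r then u $ c else 0)"
      by (intro sum.cong refl) (use r in \<open>auto simp: Pmat_entry\<close>)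
    also have "\<dots> = x $ block_start ns (blk ns r)" using br by (simp add: u_def)
    also have "\<dots> = x $ r" using key[OF r] key[OF st_lt[OF br]] blk_st[OF br] by simp
    finally show "x $ r = (bP *\<^sub>v u) $ r" by simp
  qed
  moreover have "u \<in> carrier_vec k" unfolding u_def by simp
  ultimately show ?thesis by blast
qed

lemma L_sym: "x < bN \<Longrightarrow> y < bN \<Longrightarrow> (\<forall>i<k. \<forall>j<k. B $$ (i,j) = B $$ (j,i)) \<Longrightarrow> bL $$ (x,y) = bL $$ (y,x)"
proof -
  assume x: "x < bN" and y: "y < bN" and s: "\<forall>i<k. \<forall>j<k. B $$ (i,j) = B $$ (j,i)"
  have "B $$ (blk ns x, blk ns y) = B $$ (blk ns y, blk ns x)"
    using s blk_in[OF x] blk_in[OF y] by blast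
  thus ?thesis unfolding L_entry[OF B x y] L_entry[OF B y x] by simp
qed

lemma block_ideal:
  assumes Bsym: "\<forall>i<k. \<forall>j<k. B $$ (i,j) = B $$ (j,i)"
    and lt: "\<forall>i<k. \<forall>j<k. lambda_i bL (Suc i) < dg k ns B j"
  shows "k_block_ideal bL k ns"
  unfolding k_block_ideal_def
proof (intro conjI allI impI)
  have Ld: "dim_row bL = bN" using Lc by simp
  from spectral_sorted[OF Lc L_sym[OF _ _ Bsym]]
  obtain us where us: "length us = bN" "set us \<subseteq> carrier_vec bN"
     "\<forall>i<bN. bL *\<^sub>v (us!i) = eigs_sorted bL ! i \<cdot>\<^sub>v (us!i)"
     "\<forall>i<bN. \<forall>j<bN. us!i \<bullet> us!j = (if i = j then 1 else 0)" by blast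
  have usc: "us ! i \<in> carrier_vec bN" if "i < bN" for i using us(1,2) nth_mem[of i us] that by auto
  show "\<exists>V. ortho_eigs_k bL k V"
  proof (intro exI[of _ "take k us"])
    show "ortho_eigs_k bL k (take k us)" unfolding ortho_eigs_k_def
    proof (intro conjI allI impI)
      show "length (take k us) = k" using us kN by simp
    next
      fix i assume i: "i < k"
      hence iN: "i < bN" using kN by simp
      have nz: "us ! i \<noteq> 0\<^sub>v bN" using us(4) iN by fastforce
      show "eigenvector bL (take k us ! i) (lambda_i bL (Suc i))"
        unfolding eigenvector_def lambda_i_def using i iN us(3) usc[OF iN] nz Ld by simp
    next
      fix i j assume "i < k" "j < k"
      thus "take k us ! i \<bullet> take k us ! j = (if i = j then 1 else 0)" using us(4) kN by simp
    qed
  qed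
next
  fix V assume V: "ortho_eigs_k bL k V"
  have lenV: "length V = k" and evV: "\<And>i. i < k \<Longrightarrow> eigenvector bL (V ! i) (lambda_i bL (Suc i))"
    and onV: "\<And>i j. i < k \<Longrightarrow> j < k \<Longrightarrow> V ! i \<bullet> V ! j = (if i = j then 1 else 0)"
    using V unfolding ortho_eigs_k_def by auto
  have Vc: "V ! i \<in> carrier_vec bN" if "i < k" for i using evV[OF that] Lc unfolding eigenvector_def by simp
  have "\<forall>i<k. \<exists>u \<in> carrier_vec k. V ! i = bP *\<^sub>v u"
    using range_P evV lt by blast
  then obtain U where U: "\<And>i. i < k \<Longrightarrow> U i \<in> carrier_vec k \<and> V ! i = bP *\<^sub>v U i" by metis
  define S where "S = mat k k (\<lambda>(r,c). U c $ r)"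
  have Sc: "S \<in> carrier_mat k k" unfolding S_def by simp
  have Pc: "bP \<in> carrier_mat bN k" by (rule Pmat_carrier)
  define W where "W = mat_of_cols bN V"
  have Wc: "W \<in> carrier_mat bN k" unfolding W_def using mat_of_cols_carrier(1)[of bN V] lenV by metis
  have WPS: "W = bP * S"
  proof (rule eq_matI)
    fix r c assume "r < dim_row (bP * S)" "c < dim_col (bP * S)"
    hence r: "r < bN" and c: "c < k" using Pc Sc by auto
    have Uc: "U c \<in> carrier_vec k" and VU: "V ! c = bP *\<^sub>v U c" using U[OF c] by auto
    have colS: "col S c = U c" by (rule eq_vecI) (use c Uc in \<open>auto simp: S_def\<close>)
    have "W $$ (r,c) = V ! c $ r" unfolding W_def by (rule mat_of_cols_index) (use r c lenV in auto)
    also have "\<dots> = (bP *\<^sub>v U c) $ r" by (simp only: VU)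
    also have "\<dots> = row bP r \<bullet> U c" using r Pc by simp
    also have "\<dots> = (bP * S) $$ (r,c)" using r c Pc Sc colS by simp
    finally show "W $$ (r,c) = (bP * S) $$ (r,c)" .
  qed (use Wc Pc Sc in auto)
  have colW: "col W i = V ! i" if "i < k" for i unfolding W_def using that lenV Vc by (simp add: col_mat_of_cols)
  have WTW: "transpose_mat W * W = 1\<^sub>m k"
    by (rule eq_matI, insert Wc colW onV, auto)
  define R where "R = transpose_mat W * bP"
  have Rc: "R \<in> carrier_mat k k" unfolding R_def using Wc Pc by simp
  have "R * S = transpose_mat W * (bP * S)" unfolding R_def
    by (rule assoc_mult_mat[of _ k bN _ k _ k]) (use Wc Pc Sc in auto)
  hence RS: "R * S = 1\<^sub>m k" using WPS WTW by simp
  have SR: "S * R = 1\<^sub>m k" by (rule mat_mult_left_right_inverse[OF Rc Sc RS])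
  have "invertible_mat S" unfolding invertible_mat_def inverts_mat_def square_mat.simps
    using Sc Rc RS SR by (intro conjI exI[of _ R]) auto
  moreover have "mat_of_cols (dim_row bL) V = bP * S" using Lc WPS unfolding W_def by simp
  ultimately show "\<exists>S\<in>carrier_mat k k. invertible_mat S \<and> mat_of_cols (dim_row bL) V = bP * S"
    using Sc by blast
qed

end

lemma Lt_eig_le:
  fixes B :: "real mat"
  assumes B: "B \<in> carrier_mat k k" and nonneg: "\<forall>i<k. \<forall>j<k. B $$ (i,j) \<ge> 0"
    and ev: "eigenvector (laplacian (B * diag_of k (\<lambda>i. real (ns i)))) v \<mu>"
  shows "\<exists>i<k. \<mu> \<le> 2 * (\<Sum>j\<in>{..<k}-{i}. B $$ (i,j) * real (ns j))"
proof -
  let ?Lt = "laplacian (B * diag_of k (\<lambda>i. real (ns i)))"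
  have Ltc: "?Lt \<in> carrier_mat k k" by (rule Lt_carrier[OF B])
  have v: "v \<in> carrier_vec k" and v0: "v \<noteq> 0\<^sub>v k" and Lv: "?Lt *\<^sub>v v = \<mu> \<cdot>\<^sub>v v"
    using ev Ltc unfolding eigenvector_def by auto
  obtain j0 where j0: "j0 < k" "v $ j0 \<noteq> 0" using v v0 by (metis eq_vecI carrier_vecD index_zero_vec)
  define m where "m = Max ((\<lambda>j. \<bar>v $ j\<bar>) ` {..<k})"
  have fin: "finite ((\<lambda>j. \<bar>v $ j\<bar>) ` {..<k})" and ne: "(\<lambda>j. \<bar>v $ j\<bar>) ` {..<k} \<noteq> {}" using j0 by auto
  obtain i where i: "i < k" "\<bar>v $ i\<bar> = m" using Max_in[OF fin ne] unfolding m_def by auto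
  have vmax: "\<bar>v $ j\<bar> \<le> \<bar>v $ i\<bar>" if "j < k" for j using Max_ge[OF fin, of "\<bar>v $ j\<bar>"] that i unfolding m_def by auto
  have vi: "\<bar>v $ i\<bar> > 0" using vmax[OF j0(1)] j0 by auto
  define c where "c j = B $$ (i,j) * real (ns j)" for j
  have c0: "c j \<ge> 0" if "j < k" for j using nonneg i that unfolding c_def by simp
  have "\<mu> * v $ i = (?Lt *\<^sub>v v) $ i" using Lv i v by simp
  also have "\<dots> = (\<Sum>j<k. ?Lt $$ (i,j) * v $ j)" using Ltc v i by (simp add: scalar_prod_def lessThan_atLeast0)
  also have "\<dots> = (\<Sum>j<k. (if j = i then dg k ns B i * v $ j else 0) - c j * v $ j)"
    unfolding c_def by (intro sum.cong refl) (use i in \<open>auto simp: Lt_entry[OF B] algebra_simps\<close>)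
  also have "\<dots> = dg k ns B i * v $ i - (\<Sum>j<k. c j * v $ j)" using i by (simp add: sum_subtractf)
  also have "dg k ns B i = (\<Sum>j<k. c j)" unfolding dg_def c_def ..
  also have "(\<Sum>j<k. c j) * v $ i - (\<Sum>j<k. c j * v $ j) = (\<Sum>j<k. c j * (v $ i - v $ j))"
    by (simp add: sum_distrib_right sum_distrib_left sum_subtractf algebra_simps)
  also have "\<dots> = (\<Sum>j\<in>{..<k}-{i}. c j * (v $ i - v $ j))"
    using i by (subst sum.remove[of _ i]) auto
  finally have eq: "\<mu> * v $ i = (\<Sum>j\<in>{..<k}-{i}. c j * (v $ i - v $ j))" .
  have "\<bar>\<mu>\<bar> * \<bar>v $ i\<bar> = \<bar>\<Sum>j\<in>{..<k}-{i}. c j * (v $ i - v $ j)\<bar>" using eq by (metis abs_mult)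
  also have "\<dots> \<le> (\<Sum>j\<in>{..<k}-{i}. \<bar>c j * (v $ i - v $ j)\<bar>)" by (rule sum_abs)
  also have "\<dots> \<le> (\<Sum>j\<in>{..<k}-{i}. c j * (2 * \<bar>v $ i\<bar>))"
  proof (rule sum_mono)
    fix j assume "j \<in> {..<k}-{i}"
    hence j: "j < k" by simp
    have "\<bar>v $ i - v $ j\<bar> \<le> 2 * \<bar>v $ i\<bar>" using vmax[OF j] by linarith
    thus "\<bar>c j * (v $ i - v $ j)\<bar> \<le> c j * (2 * \<bar>v $ i\<bar>)" using c0[OF j]
      by (simp add: abs_mult mult_left_mono)
  qed
  also have "\<dots> = (2 * (\<Sum>j\<in>{..<k}-{i}. c j)) * \<bar>v $ i\<bar>" by (simp add: sum_distrib_right sum_distrib_left mult_ac)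
  finally have "\<bar>\<mu>\<bar> \<le> 2 * (\<Sum>j\<in>{..<k}-{i}. c j)" using vi by (simp add: mult_le_cancel_right)
  hence "\<mu> \<le> 2 * (\<Sum>j\<in>{..<k}-{i}. c j)" by linarith
  thus ?thesis using i unfolding c_def by blast
qed

lemma sl_append:
  fixes A C :: "real multiset"
  assumes "\<forall>a\<in>#A. \<forall>b\<in>#C. a \<le> b"
  shows "sorted_list_of_multiset (A + C) = sorted_list_of_multiset A @ sorted_list_of_multiset C"
proof -
  let ?xs = "sorted_list_of_multiset A" and ?ys = "sorted_list_of_multiset C"
  have s: "sorted (?xs @ ?ys)" using assms by (simp add: sorted_append)
  have e: "sorted_list_of_multiset (mset (?xs @ ?ys)) = ?xs @ ?ys"
    unfolding sorted_list_of_multiset_mset by (rule sorted_sort_id[OF s])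
  have "mset (?xs @ ?ys) = A + C" by simp
  thus ?thesis using e by metis
qed

theorem proposition10:
  fixes k :: nat and ns :: "nat \<Rightarrow> nat" and B :: "real mat"
  assumes ns_pos: "\<forall>i<k. ns i \<ge> 1"
    and n_gt_k: "(\<Sum>i<k. ns i) > k"
    and B_carrier: "B \<in> carrier_mat k k"
    and B_sym: "\<forall>i<k. \<forall>j<k. B $$ (i,j) = B $$ (j,i)"
    and B_nonneg: "\<forall>i<k. \<forall>j<k. B $$ (i,j) \<ge> 0"
    and Delta_pos:
      "Min {B $$ (i,i) | i. i < k}
        - 2 * real (Max {ns i | i. i < k}) / real (Min {ns i | i. i < k})
          * Max {(\<Sum>j\<in>{..<k} - {i}. B $$ (i,j)) | i. i < k} > 0"
  shows
    "(let P = Pmat k ns;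
          A_blk = P * B * transpose_mat P;
          L_blk = laplacian A_blk;
          Bt = B * diag_of k (\<lambda>i. real (ns i));
          Lt = laplacian Bt;
          nmin = real (Min {ns i | i. i < k});
          nmax = real (Max {ns i | i. i < k});
          bmin = Min {(\<Sum>j<k. B $$ (i,j)) | i. i < k};
          Delta = Min {B $$ (i,i) | i. i < k}
                  - 2 * nmax / nmin * Max {(\<Sum>j\<in>{..<k} - {i}. B $$ (i,j)) | i. i < k}
      in
        (\<forall>i\<in>{1..k}. lambda_i L_blk i = lambda_i Lt i \<and>
            (\<forall>v. eigenvector Lt v (lambda_i Lt i) \<longrightarrow>
                 eigenvector L_blk (P *\<^sub>v v) (lambda_i L_blk i)))
      \<and> k_block_ideal L_blk k ns
      \<and> lambda_i L_blk (k+1) \<ge> bmin * nmin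
      \<and> lambda_i L_blk (k+1) - lambda_i L_blk k \<ge> Delta * nmin)"
proof -
  have k0: "0 < k" using n_gt_k by (cases k) auto
  have kN: "k < block_start ns k" using n_gt_k unfolding block_start_def .
  let ?P = "Pmat k ns"
  let ?L = "laplacian (Pmat k ns * B * transpose_mat (Pmat k ns))"
  let ?Lt = "laplacian (B * diag_of k (\<lambda>i. real (ns i)))"
  let ?N = "block_start ns k"
  define nmin where "nmin = real (Min {ns i | i. i < k})"
  define nmax where "nmax = real (Max {ns i | i. i < k})"
  define amin where "amin = Min {B $$ (i,i) | i. i < k}"
  define bmax where "bmax = Max {(\<Sum>j\<in>{..<k} - {i}. B $$ (i,j)) | i. i < k}"
  define bmin where "bmin = Min {(\<Sum>j<k. B $$ (i,j)) | i. i < k}"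
  have img: "{f i | i. i < k} = f ` {..<k}" for f :: "nat \<Rightarrow> 'a" by auto
  have fin: "finite {f i | i. i < k}" for f :: "nat \<Rightarrow> 'a" unfolding img by simp
  have ne: "{f i | i. i < k} \<noteq> {}" for f :: "nat \<Rightarrow> 'a" using k0 by auto
  have nmin_le: "nmin \<le> real (ns i)" if "i < k" for i
    unfolding nmin_def of_nat_le_iff by (rule Min_le[OF fin]) (use that in auto)
  have nmax_ge: "real (ns i) \<le> nmax" if "i < k" for i
    unfolding nmax_def of_nat_le_iff by (rule Max_ge[OF fin]) (use that in auto)
  have nmin_pos: "nmin > 0"
  proof -
    obtain i where "i < k" "Min {ns i | i. i < k} = ns i" using Min_in[OF fin[of ns] ne[of ns]] by auto
    thus ?thesis using ns_pos unfolding nmin_def by auto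
  qed
  have amin_le: "amin \<le> B $$ (i,i)" if "i < k" for i
    unfolding amin_def by (rule Min_le[OF fin]) (use that in auto)
  have amin_nn: "amin \<ge> 0"
  proof -
    obtain i where "i < k" "amin = B $$ (i,i)" using Min_in[OF fin[of "\<lambda>i. B $$ (i,i)"] ne[of "\<lambda>i. B $$ (i,i)"]] unfolding amin_def by auto
    thus ?thesis using B_nonneg by auto
  qed
  have bmax_ge: "(\<Sum>j\<in>{..<k} - {i}. B $$ (i,j)) \<le> bmax" if "i < k" for i
    unfolding bmax_def by (rule Max_ge[OF fin]) (use that in auto)
  have bmin_le: "bmin \<le> (\<Sum>j<k. B $$ (i,j))" if "i < k" for i
    unfolding bmin_def by (rule Min_le[OF fin]) (use that in auto)
  define T where "T = 2 * nmax * bmax"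
  have Dn: "(amin - 2 * nmax / nmin * bmax) * nmin = amin * nmin - T"
    unfolding T_def using nmin_pos by (simp add: field_simps)
  have Dpos: "amin - 2 * nmax / nmin * bmax > 0" using Delta_pos unfolding amin_def nmax_def nmin_def bmax_def .
  have aT: "amin * nmin > T" using Dn Dpos nmin_pos by (metis diff_gt_0_iff_gt mult_pos_pos)
  have dg_lb: "dg k ns B i \<ge> amin * nmin \<and> dg k ns B i \<ge> bmin * nmin" if i: "i < k" for i
  proof
    have "amin * nmin \<le> B $$ (i,i) * real (ns i)"
      using amin_le[OF i] nmin_le[OF i] amin_nn nmin_pos by (meson mult_mono less_imp_le order_trans of_nat_0_le_iff B_nonneg i)
    also have "\<dots> \<le> dg k ns B i" unfolding dg_def
      by (rule member_le_sum[where f = "\<lambda>j. B $$ (i,j) * real (ns j)"]) (use i B_nonneg in auto)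
    finally show "amin * nmin \<le> dg k ns B i" .
    have "bmin * nmin \<le> (\<Sum>j<k. B $$ (i,j)) * nmin" using bmin_le[OF i] nmin_pos by simp
    also have "\<dots> = (\<Sum>j<k. B $$ (i,j) * nmin)" by (simp add: sum_distrib_right)
    also have "\<dots> \<le> dg k ns B i" unfolding dg_def
      by (rule sum_mono) (use i B_nonneg nmin_le in \<open>auto intro: mult_left_mono\<close>)
    finally show "bmin * nmin \<le> dg k ns B i" .
  qed
  have eig_le: "\<mu> \<le> T" if ev: "eigenvector ?Lt v \<mu>" for v \<mu>
  proof -
    obtain i where i: "i < k" and le: "\<mu> \<le> 2 * (\<Sum>j\<in>{..<k}-{i}. B $$ (i,j) * real (ns j))"
      using Lt_eig_le[OF B_carrier B_nonneg ev] by blast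
    have "(\<Sum>j\<in>{..<k}-{i}. B $$ (i,j) * real (ns j)) \<le> (\<Sum>j\<in>{..<k}-{i}. B $$ (i,j) * nmax)"
      by (rule sum_mono) (use i B_nonneg nmax_ge in \<open>auto intro: mult_left_mono\<close>)
    also have "\<dots> = nmax * (\<Sum>j\<in>{..<k}-{i}. B $$ (i,j))" by (simp add: sum_distrib_left mult_ac)
    also have "\<dots> \<le> nmax * bmax" using bmax_ge[OF i] nmax_ge[OF i] by (intro mult_left_mono) auto
    finally show ?thesis using le unfolding T_def by linarith
  qed
  have Ltc: "?Lt \<in> carrier_mat k k" by (rule Lt_carrier[OF B_carrier])
  have Lc: "?L \<in> carrier_mat ?N ?N" by (rule L_carrier[OF B_carrier])
  have root_le: "x \<le> T" if xr: "x \<in># proots (char_poly ?Lt)" for x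
  proof -
    have "poly (char_poly ?Lt) x = 0" using xr by (metis count_proots order_root not_in_iff)
    hence "eigenvalue ?Lt x" using eigenvalue_root_char_poly[OF Ltc] by simp
    then obtain v where "eigenvector ?Lt v x" unfolding eigenvalue_def by blast
    thus ?thesis by (rule eig_le)
  qed
  define l where "l = map (ddv k ns B) [0..<?N - k]"
  have l_lb: "y > T \<and> y \<ge> amin * nmin \<and> y \<ge> bmin * nmin" if yl: "y \<in> set l" for y
  proof -
    obtain i where i: "i < ?N - k" "y = ddv k ns B i" using yl unfolding l_def by auto
    have b: "blk ns (gmap k ns i) < k" by (rule blk_g[OF B_carrier ns_pos kN i(1)])
    have "y = dg k ns B (blk ns (gmap k ns i))" using i ddv_def[OF B_carrier ns_pos kN] by simp
    thus ?thesis using dg_lb[OF b] aT by auto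
  qed
  have pL: "proots (char_poly ?L) = proots (char_poly ?Lt) + mset l"
    unfolding l_def by (rule proots_L[OF B_carrier ns_pos kN])
  have Lsym: "\<And>x y. x < ?N \<Longrightarrow> y < ?N \<Longrightarrow> ?L $$ (x,y) = ?L $$ (y,x)"
    using L_sym[OF B_carrier ns_pos kN _ _ B_sym] by blast
  have lenL: "length (eigs_sorted ?L) = ?N" using spectral_sorted[OF Lc Lsym] by blast
  define xs where "xs = eigs_sorted ?Lt"
  define ys where "ys = sort l"
  have es: "eigs_sorted ?L = xs @ ys"
    unfolding eigs_sorted_def pL xs_def ys_def
    by (subst sl_append) (use root_le l_lb in \<open>force simp: sorted_list_of_multiset_mset\<close>)+
  have lenys: "length ys = ?N - k" unfolding ys_def l_def by simp
  have lenxs: "length xs = k" using lenL lenys kN unfolding es by simp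
  have xsT: "xs ! i \<le> T" if "i < k" for i
  proof -
    have "xs ! i \<in> set xs" using that lenxs by simp
    hence "xs ! i \<in># proots (char_poly ?Lt)" unfolding xs_def eigs_sorted_def by simp
    thus ?thesis by (rule root_le)
  qed
  have ys0: "ys ! 0 \<in> set l" using lenys kN unfolding ys_def by (metis length_greater_0_conv nth_mem set_sort zero_less_diff)
  have lamL: "lambda_i ?L i = lambda_i ?Lt i" if "i \<in> {1..k}" for i
  proof -
    have "i - 1 < k" using that by auto
    thus ?thesis using lenxs unfolding lambda_i_def es by (simp add: nth_append xs_def)
  qed
  have lamk1: "lambda_i ?L (k+1) = ys ! 0" unfolding lambda_i_def es using lenxs by (simp add: nth_append)
  have lamk: "lambda_i ?L k = xs ! (k - 1)" unfolding lambda_i_def es using lenxs k0 by (simp add: nth_append)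
  have part1: "\<forall>i\<in>{1..k}. lambda_i ?L i = lambda_i ?Lt i \<and>
      (\<forall>v. eigenvector ?Lt v (lambda_i ?Lt i) \<longrightarrow> eigenvector ?L (?P *\<^sub>v v) (lambda_i ?L i))"
    using lamL P_eig[OF B_carrier ns_pos kN] by simp
  have part2: "k_block_ideal ?L k ns"
  proof (rule block_ideal[OF B_carrier ns_pos kN B_sym], intro allI impI)
    fix i j assume i: "i < k" and j: "j < k"
    have "lambda_i ?L (Suc i) = xs ! i" unfolding lambda_i_def es using lenxs i by (simp add: nth_append)
    thus "lambda_i ?L (Suc i) < dg k ns B j" using xsT[OF i] aT dg_lb[OF j] by simp
  qed
  have part3: "lambda_i ?L (k+1) \<ge> bmin * nmin" using lamk1 l_lb[OF ys0] by simp
  have part4: "lambda_i ?L (k+1) - lambda_i ?L k \<ge> (amin - 2 * nmax / nmin * bmax) * nmin"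
    using lamk1 lamk l_lb[OF ys0] xsT[of "k - 1"] k0 Dn by simp
  show ?thesis unfolding Let_def
    using part1 part2 part3 part4 unfolding nmin_def nmax_def amin_def bmax_def bmin_def
    by blast
qed

end
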